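(* Let $G$ be a non-singular graph with $n$ vertices and adjacency matrix $A=(a_{ij})$. If $f:\mathcal{A}_{RW}(G)\to\mathcal{A}(G)$ is an algebra homomorphism, then either $f$ is the null map, or $f$ is an isomorphism given by $f(e_i)=\alpha_i e_{\pi(i)}$ for all $i\in V$, where $\alpha_i\neq0$ are scalars and $\pi$ is an element of the symmetric group $S_n$.
   Context: Graphs are simple (no loops or multiple edges) and connected; here $V=\{1,\dots,n\}$ is finite. The adjacency matrix is $A=(a_{ij})$ with $a_{ij}=1$ if $i,j$ are neighbors and $0$ otherwise; $G$ is non-singular if $\det A\ne0$. $\deg(i)$ is the number of neighbors of $i$. An evolution algebra over $\mathbb{R}$ is an algebra with a basis $\{e_i\}$ (natural basis) such that $e_i\cdot e_j=0$ for $i\ne j$ and $e_i\cdot e_i=\sum_k c_{ik}e_k$. $\mathcal{A}(G)$ has natural basis $\{e_i:i\in V\}$ with $e_i\cdot e_i=\sum_{k\in V}a_{ik}e_k$; $\mathcal{A}_{RW}(G)$ has natural basis $\{e_i:i\in V\}$ with $e_i\cdot e_i=\sum_{k\in V}\frac{a_{ik}}{\deg(i)}e_k$; in both, $e_i\cdot e_j=0$ for $i\ne j$. A homomorphism is a linear map $f$ with $f(u\cdot v)=f(u)\cdot f(v)$. *)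

theory Defs
  imports "HOL-Analysis.Analysis"
begin

text \<open>Vertices are the elements of a finite type 'n (so n = CARD('n)).
  A graph is given by its adjacency matrix.\<close>

definition simple_adjacency :: "real^'n^'n \<Rightarrow> bool" where
  "simple_adjacency A \<longleftrightarrow>
     (\<forall>i j. A$i$j = 0 \<or> A$i$j = 1) \<and> (\<forall>i j. A$i$j = A$j$i) \<and> (\<forall>i. A$i$i = 0)"

definition adjacent :: "real^'n^'n \<Rightarrow> 'n \<Rightarrow> 'n \<Rightarrow> bool" where
  "adjacent A i j \<longleftrightarrow> A$i$j = 1"

definition graph_connected :: "real^'n^'n \<Rightarrow> bool" where
  "graph_connected A \<longleftrightarrow> (\<forall>i j. (adjacent A)\<^sup>*\<^sup>* i j)"

definition deg :: "real^'n^'n \<Rightarrow> 'n \<Rightarrow> nat" where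
  "deg A i = card {k. adjacent A i k}"

text \<open>Evolution algebra with structure matrix C on the natural basis:
  elements are coordinate vectors, e_i e_i = sum_k C_ik e_k, e_i e_j = 0 for i ~= j.\<close>

definition evo_mult :: "real^'n^'n \<Rightarrow> real^'n \<Rightarrow> real^'n \<Rightarrow> real^'n" where
  "evo_mult C u v = (\<chi> k. \<Sum>i\<in>UNIV. u$i * v$i * C$i$k)"

definition nat_basis :: "'n \<Rightarrow> real^'n" where
  "nat_basis i = axis i 1"

text \<open>Structure matrix of A(G) is A; that of A_RW(G) is a_ik / deg i.\<close>
definition rw_matrix :: "real^'n^'n \<Rightarrow> real^'n^'n" where
  "rw_matrix A = (\<chi> i k. A$i$k / real (deg A i))"

definition evo_hom :: "real^'n^'n \<Rightarrow> real^'n^'n \<Rightarrow> (real^'n \<Rightarrow> real^'n) \<Rightarrow> bool" where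
  "evo_hom C D f \<longleftrightarrow> linear f \<and> (\<forall>u v. f (evo_mult C u v) = evo_mult D (f u) (f v))"

end

theory Submission
  imports Defs
begin

lemma evo_mult_vm: "evo_mult C u v = (\<chi> l. u$l * v$l) v* C"
  unfolding evo_mult_def vector_matrix_mult_def by (simp add: mult.commute)

lemma ker_A:
  fixes A :: "real^'n^'n"
  assumes "det A \<noteq> 0" and "w v* A = 0" shows "w = 0"
proof -
  have "det (transpose A) \<noteq> 0" using assms by (simp add: det_transpose)
  then have "invertible (transpose A)" by (simp add: invertible_det_nz)
  then have "\<exists>B. B ** transpose A = mat 1" unfolding invertible_def by blast
  then have "\<forall>x. transpose A *v x = 0 \<longrightarrow> x = 0" using matrix_left_invertible_ker by blast
  then show ?thesis using assms(2) by simp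
qed

lemma f_expand:
  assumes "linear f"
  shows "f x = (\<Sum>j\<in>UNIV. x$j *\<^sub>R f (nat_basis j))"
proof -
  have "f x = f (\<Sum>j\<in>UNIV. x$j *\<^sub>R nat_basis j)"
    using basis_expansion[of x] by (simp add: nat_basis_def scalar_mult_eq_scaleR)
  also have "\<dots> = (\<Sum>j\<in>UNIV. x$j *\<^sub>R f (nat_basis j))"
    using assms by (simp add: linear_sum linear_scale)
  finally show ?thesis .
qed

theorem proposition2p15:
  fixes A :: "real^'n^'n" and f :: "real^'n \<Rightarrow> real^'n"
  assumes "simple_adjacency A" and "graph_connected A" and "det A \<noteq> 0"
    and "evo_hom (rw_matrix A) A f"
  shows "(\<forall>u. f u = 0) \<or>
         (bij f \<and> (\<exists>\<alpha> \<pi>. \<pi> permutes (UNIV :: 'n set) \<and> (\<forall>i. \<alpha> i \<noteq> (0::real)) \<and>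
                    (\<forall>i. f (nat_basis i) = \<alpha> i *\<^sub>R nat_basis (\<pi> i))))"
proof -
  define u where "u i = f (nat_basis i)" for i
  define C where "C = rw_matrix A"
  have lin: "linear f" and hom: "\<And>x y. f (evo_mult C x y) = evo_mult A (f x) (f y)"
    using assms(4) unfolding evo_hom_def C_def by auto
  have f0: "f 0 = 0" using lin by (simp add: linear_0)
  have disj: "u i $ k * u j $ k = 0" if "i \<noteq> j" for i j k
  proof -
    have "evo_mult C (nat_basis i) (nat_basis j) = 0"
      using that unfolding evo_mult_def nat_basis_def
      by (vector axis_def) (auto intro!: sum.neutral)
    then have "evo_mult A (u i) (u j) = 0" using hom[of "nat_basis i" "nat_basis j"] f0
      unfolding u_def by simp
    then have "(\<chi> l. u i $ l * u j $ l) = 0"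
      using ker_A[OF assms(3)] by (simp add: evo_mult_vm)
    then have "(\<chi> l. u i $ l * u j $ l) $ k = 0" by simp
    then show ?thesis by simp
  qed
  have diag: "(\<Sum>k\<in>UNIV. C$i$k *\<^sub>R u k) = evo_mult A (u i) (u i)" for i
  proof -
    have "evo_mult C (nat_basis i) (nat_basis i) = (\<Sum>k\<in>UNIV. C$i$k *\<^sub>R nat_basis k)"
    proof -
      have "evo_mult C (nat_basis i) (nat_basis i) = (\<chi> k. C$i$k)"
      proof -
        have "(\<Sum>l\<in>UNIV. axis i 1 $ l * axis i 1 $ l * C $ l $ k) = C$i$k" for k :: 'n
        proof -
          have "(\<Sum>l\<in>UNIV. axis i 1 $ l * axis i 1 $ l * C $ l $ k)
               = (\<Sum>l\<in>UNIV. if l = i then C $ l $ k else 0)"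
            by (rule sum.cong) (auto simp: axis_def)
          then show ?thesis by simp
        qed
        then show ?thesis unfolding evo_mult_def nat_basis_def by (simp add: vec_eq_iff)
      qed
      also have "\<dots> = (\<Sum>k\<in>UNIV. C$i$k *\<^sub>R nat_basis k)"
        using basis_expansion[of "(\<chi> k. C$i$k)"] by (simp add: nat_basis_def scalar_mult_eq_scaleR)
      finally show ?thesis .
    qed
    then show ?thesis using hom[of "nat_basis i" "nat_basis i"] lin
      unfolding u_def by (simp add: linear_sum linear_scale)
  qed
  have prop0: "u k = 0" if "u i = 0" "adjacent A i k" for i k
  proof (rule ccontr)
    assume "u k \<noteq> 0"
    then obtain m where m: "u k $ m \<noteq> 0" by (auto simp: vec_eq_iff)
    have "finite {k. adjacent A i k}" by simp
    then have "deg A i > 0" using that(2) unfolding deg_def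
      by (auto simp: card_gt_0_iff)
    then have Cik: "C$i$k \<noteq> 0" using that(2) unfolding C_def rw_matrix_def adjacent_def by simp
    have e0: "evo_mult A 0 0 = 0" unfolding evo_mult_def by (simp add: vec_eq_iff)
    have "(\<Sum>k\<in>UNIV. C$i$k *\<^sub>R u k) = 0" using diag[of i] that(1) e0 by simp
    then have "(\<Sum>k'\<in>UNIV. C$i$k' * u k' $ m) = 0"
    proof -
      assume h: "(\<Sum>k\<in>UNIV. C$i$k *\<^sub>R u k) = 0"
      have "(\<Sum>k\<in>UNIV. C$i$k *\<^sub>R u k) $ m = 0" using h by simp
      then show ?thesis by (simp add: sum_component)
    qed
    moreover have "(\<Sum>k'\<in>UNIV. C$i$k' * u k' $ m) = C$i$k * u k $ m"
    proof (rule sum.remove[THEN trans])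
      show "C $ i $ k * u k $ m + (\<Sum>k'\<in>UNIV - {k}. C $ i $ k' * u k' $ m) = C $ i $ k * u k $ m"
      proof -
        have "\<And>k'. k' \<in> UNIV - {k} \<Longrightarrow> u k' $ m = 0"
        proof -
          fix k' assume "k' \<in> UNIV - {k}"
          then have "k' \<noteq> k" by blast
          then have "u k' $ m * u k $ m = 0" using disj by blast
          then show "u k' $ m = 0" using m by simp
        qed
        then show ?thesis by simp
      qed
    qed auto
    ultimately show False using Cik m by simp
  qed
  show ?thesis
  proof (cases "\<exists>i. u i = 0")
    case True
    then obtain i0 where i0: "u i0 = 0" by blast
    have "u j = 0" for j
    proof -
      have "(adjacent A)\<^sup>*\<^sup>* i0 j" using assms(2) unfolding graph_connected_def by blast
      then show ?thesis
        by (induction rule: rtranclp_induct) (use i0 prop0 in auto)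
    qed
    then have "\<forall>x. f x = 0"
    proof (intro allI)
      fix x
      assume h: "\<And>j. u j = 0"
      show "f x = 0" unfolding f_expand[OF lin, of x] using h unfolding u_def by simp
    qed
    then show ?thesis by blast
  next
    case False
    then have "\<forall>i. \<exists>k. u i $ k \<noteq> 0" by (auto simp: vec_eq_iff)
    then obtain \<pi> where pi: "\<And>i. u i $ \<pi> i \<noteq> 0" by metis
    have inj: "inj \<pi>"
    proof (rule injI)
      fix i j assume "\<pi> i = \<pi> j"
      then show "i = j" using disj[of i j "\<pi> i"] pi[of i] pi[of j] by force
    qed
    then have surj: "surj \<pi>" using finite_UNIV_inj_surj[OF finite] by blast
    have perm: "\<pi> permutes UNIV" using inj surj by (intro bij_imp_permutes) (auto simp: bij_def)
    have ueq: "u i = u i $ \<pi> i *\<^sub>R nat_basis (\<pi> i)" for i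
    proof -
      have "u i $ k = (u i $ \<pi> i *\<^sub>R nat_basis (\<pi> i)) $ k" for k
      proof (cases "k = \<pi> i")
        case True then show ?thesis by (simp add: nat_basis_def axis_def)
      next
        case False
        obtain j where j: "k = \<pi> j" using surj by (metis surjD)
        then have "j \<noteq> i" using False by auto
        then have "u i $ k = 0" using disj[of i j k] pi[of j] j by auto
        then show ?thesis using False by (simp add: nat_basis_def axis_def)
      qed
      then show ?thesis by (subst vec_eq_iff) blast
    qed
    have "inj f"
    proof -
      have "x = 0" if "f x = 0" for x
      proof -
        have "x $ i = 0" for i
        proof -
          have "(f x) $ \<pi> i = (\<Sum>j\<in>UNIV. x$j * u j $ \<pi> i)"
            using f_expand[OF lin, of x] unfolding u_def by (simp add: sum_component)
          also have "\<dots> = x $ i * u i $ \<pi> i"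
          proof (rule sum.remove[THEN trans])
            have "\<And>j. j \<in> UNIV - {i} \<Longrightarrow> u j $ \<pi> i = 0"
            proof -
              fix j assume "j \<in> UNIV - {i}"
              then have "j \<noteq> i" by blast
              then have "u j $ \<pi> i * u i $ \<pi> i = 0" using disj by blast
              then show "u j $ \<pi> i = 0" using pi[of i] by simp
            qed
            then show "x $ i * u i $ \<pi> i + (\<Sum>j\<in>UNIV - {i}. x $ j * u j $ \<pi> i) = x $ i * u i $ \<pi> i"
              by simp
          qed auto
          finally show ?thesis using that pi[of i] by simp
        qed
        then show ?thesis by (simp add: vec_eq_iff)
      qed
      then show ?thesis using linear_injective_0[OF lin] by blast
    qed
    then have "bij f" using linear_inj_imp_surj[OF lin] by (simp add: bij_def)
    moreover have "\<forall>i. u i $ \<pi> i \<noteq> 0" using pi by blast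
    moreover have "\<forall>i. f (nat_basis i) = u i $ \<pi> i *\<^sub>R nat_basis (\<pi> i)"
      using ueq unfolding u_def by metis
    ultimately show ?thesis using perm
      by (intro disjI2 conjI exI[where x="\<lambda>i. u i $ \<pi> i"] exI[where x=\<pi>]) auto
  qed
qed

end
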